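(* Let $\mathbf{X}\sim\mathcal{MSP}(\mathbf{0},\boldsymbol{\Sigma}^{\mathrm{row}},\kappa)$ be a $p$-variate $L^2$-continuous process with mean zero on a compact interval $\mathcal{T}=\mathcal{T}_1\cup\dots\cup\mathcal{T}_d$ (pairwise disjoint subintervals), with separable covariance operator $\mathcal{C}=\boldsymbol{\Sigma}^{\mathrm{row}}\mathcal{K}$ and kernel $\mathbf{K}(s,t)=\boldsymbol{\Sigma}^{\mathrm{row}}\kappa(s,t)$. Let $(\lambda_i^{\ker},\xi_i)$, $i=1,\dots,m$, be the $m$ largest eigenpairs of $\mathcal{K}$ (with $\lambda_m^{\ker}>0$), $(\lambda^{\mathrm{row}}_j,\mathbf{v}^{\mathrm{row}}_j)$, $j=1,\dots,p$, the eigenpairs of $\boldsymbol{\Sigma}^{\mathrm{row}}$, $v^{\mathrm{row}}_{j,k}=\mathbf{e}_k'\mathbf{v}^{\mathrm{row}}_j$, and $M=mp$. Then for each $k\in\{1,\dots,p\}$ and $a\in\{1,\dots,d\}$, $$\Theta_{k,\mathcal{T}_a}(\mathbf{X},\mathbf{0};\boldsymbol{\Sigma}^{\mathrm{row}}\kappa,M)=\sum_{i=1}^m\sum_{j=1}^p\frac{1}{\lambda^{\ker}_i\lambda^{\mathrm{row}}_j}\Big(\langle X_k,\xi_i\rangle_{\mathcal{T}_a}v^{\mathrm{row}}_{j,k}\sum_{l=1}^p\langle X_l,\xi_i\rangle_{\mathcal{T}}v^{\mathrm{row}}_{j,l}\Big).$$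
   Context: $\boldsymbol{\Sigma}^{\mathrm{row}}$ is a $p\times p$ symmetric positive definite matrix, $\kappa$ a positive definite kernel, and $\mathcal{K}$ the integral operator with kernel $\kappa$; $\langle f,g\rangle_{\mathcal{T}_a}=\int_{\mathcal{T}_a}fg$, $\langle\mathbf{x},\mathbf{y}\rangle=\sum_j\int_{\mathcal{T}}x_jy_j$. The eigenfunctions of $\mathcal{C}$ are taken as $\xi_i\mathbf{v}^{\mathrm{row}}_j$ with eigenvalues $\lambda^{\ker}_i\lambda^{\mathrm{row}}_j$, and $\mathrm{fMMD}^2(\mathbf{Y},\boldsymbol{\mu};\mathbf{K},M)=\sum_{i,j}(\lambda^{\ker}_i\lambda^{\mathrm{row}}_j)^{-1}\langle\mathbf{Y}-\boldsymbol{\mu},\xi_i\mathbf{v}^{\mathrm{row}}_j\rangle^2$ over these $M=mp$ eigenpairs. For a set $Q\subseteq\{1,\dots,p\}\times\{1,\dots,d\}$, $\hat{\mathbf{X}}^Q$ has $\hat X^Q_j(t)=X_j(t)$ if $t\in\mathcal{T}_b$ with $(j,b)\in Q$ and $\hat X^Q_j(t)=\mu_j(t)$ otherwise (here $\boldsymbol{\mu}=\mathbf{0}$). $\Theta_{k,\mathcal{T}_a}(\mathbf{X},\boldsymbol{\mu};\mathbf{K},M)=\sum_{Q\not\ni(k,a)}\frac{|Q|!(pd-|Q|-1)!}{(pd)!}[v(Q\cup\{(k,a)\})-v(Q)]$ with $v(Q)=\mathrm{fMMD}^2(\hat{\mathbf{X}}^Q,\boldsymbol{\mu};\mathbf{K},M)$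 (Shapley value of cell $(k,a)$). *)

theory Defs
  imports "HOL-Probability.Probability"
begin

definition ip_on :: "real set \<Rightarrow> (real \<Rightarrow> real) \<Rightarrow> (real \<Rightarrow> real) \<Rightarrow> real" where
  "ip_on S f g = (LINT t:S|lborel. f t * g t)"

definition sq_int :: "real set \<Rightarrow> (real \<Rightarrow> real) \<Rightarrow> bool" where
  "sq_int S f \<longleftrightarrow> set_borel_measurable lborel S f \<and> set_integrable lborel S (\<lambda>t. (f t)\<^sup>2)"

definition pd_kernel :: "real set \<Rightarrow> (real \<Rightarrow> real \<Rightarrow> real) \<Rightarrow> bool" where
  "pd_kernel T \<kappa> \<longleftrightarrow> (\<forall>s\<in>T. \<forall>t\<in>T. \<kappa> s t = \<kappa> t s) \<and>
     (\<forall>(n::nat) (ts::nat \<Rightarrow> real) (c::nat \<Rightarrow> real). (\<forall>i<n. ts i \<in> T) \<longrightarrow>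
        (\<Sum>i<n. \<Sum>j<n. c i * c j * \<kappa> (ts i) (ts j)) \<ge> 0)"

definition spd_matrix :: "nat \<Rightarrow> (nat \<Rightarrow> nat \<Rightarrow> real) \<Rightarrow> bool" where
  "spd_matrix p S \<longleftrightarrow> (\<forall>j\<in>{1..p}. \<forall>l\<in>{1..p}. S j l = S l j) \<and>
     (\<forall>c::nat \<Rightarrow> real. (\<exists>j\<in>{1..p}. c j \<noteq> 0) \<longrightarrow>
        (\<Sum>j=1..p. \<Sum>l=1..p. c j * S j l * c l) > 0)"

definition int_op :: "real set \<Rightarrow> (real \<Rightarrow> real \<Rightarrow> real) \<Rightarrow> (real \<Rightarrow> real) \<Rightarrow> real \<Rightarrow> real" where
  "int_op T \<kappa> f s = (LINT t:T|lborel. \<kappa> s t * f t)"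

text \<open>fMMD^2(Y, mu; K, M) with M = m p eigenpairs xi_i v_j (eigenvalues lker_i * lrow_j);
  the l-th component of the eigenfunction xi_i v_j is t \<mapsto> xi_i(t) * v_{j,l}.\<close>
definition fmmd2 ::
  "real set \<Rightarrow> nat \<Rightarrow> nat \<Rightarrow> (nat \<Rightarrow> real) \<Rightarrow> (nat \<Rightarrow> real \<Rightarrow> real) \<Rightarrow>
   (nat \<Rightarrow> real) \<Rightarrow> (nat \<Rightarrow> nat \<Rightarrow> real) \<Rightarrow>
   (nat \<Rightarrow> real \<Rightarrow> real) \<Rightarrow> (nat \<Rightarrow> real \<Rightarrow> real) \<Rightarrow> real" where
  "fmmd2 T p m lker \<xi> lrow vrow Y \<mu> =
     (\<Sum>i=1..m. \<Sum>j=1..p. (1 / (lker i * lrow j)) *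
        (\<Sum>l=1..p. ip_on T (\<lambda>t. Y l t - \<mu> l t) (\<lambda>t. \<xi> i t * vrow j l))\<^sup>2)"

definition hatX :: "(nat \<Rightarrow> real set) \<Rightarrow> (nat \<times> nat) set \<Rightarrow>
    (nat \<Rightarrow> real \<Rightarrow> real) \<Rightarrow> (nat \<Rightarrow> real \<Rightarrow> real) \<Rightarrow> nat \<Rightarrow> real \<Rightarrow> real" where
  "hatX Ts Q X \<mu> j t = (if \<exists>b. (j, b) \<in> Q \<and> t \<in> Ts b then X j t else \<mu> j t)"

definition shapley :: "'c set \<Rightarrow> ('c set \<Rightarrow> real) \<Rightarrow> 'c \<Rightarrow> real" where
  "shapley N v c = (\<Sum>Q\<in>Pow (N - {c}).
      fact (card Q) * fact (card N - card Q - 1) / fact (card N) * (v (insert c Q) - v Q))"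

definition Theta ::
  "real set \<Rightarrow> (nat \<Rightarrow> real set) \<Rightarrow> nat \<Rightarrow> nat \<Rightarrow> nat \<Rightarrow> (nat \<Rightarrow> real) \<Rightarrow> (nat \<Rightarrow> real \<Rightarrow> real) \<Rightarrow>
   (nat \<Rightarrow> real) \<Rightarrow> (nat \<Rightarrow> nat \<Rightarrow> real) \<Rightarrow>
   (nat \<Rightarrow> real \<Rightarrow> real) \<Rightarrow> (nat \<Rightarrow> real \<Rightarrow> real) \<Rightarrow> nat \<Rightarrow> nat \<Rightarrow> real" where
  "Theta T Ts p d m lker \<xi> lrow vrow X \<mu> k a =
     shapley ({1..p} \<times> {1..d})
       (\<lambda>Q. fmmd2 T p m lker \<xi> lrow vrow (hatX Ts Q X \<mu>) \<mu>) (k, a)"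

end

theory Submission
  imports Defs
begin


definition W :: "nat \<Rightarrow> nat \<Rightarrow> real" where
  "W m s = fact s * fact (m - s) / fact (Suc m)"

lemma W_total:
  assumes "finite A"
  shows "(\<Sum>Q\<in>Pow A. W (card A) (card Q)) = 1"
proof -
  let ?m = "card A"
  have "(\<Sum>Q\<in>Pow A. W ?m (card Q)) = (\<Sum>s\<in>{0..?m}. \<Sum>Q\<in>{Q\<in>Pow A. card Q = s}. W ?m (card Q))"
    by (rule sum.group[symmetric]) (use assms in \<open>auto intro: card_mono\<close>)
  also have "\<dots> = (\<Sum>s\<in>{0..?m}. real (?m choose s) * W ?m s)"
  proof (rule sum.cong[OF refl])
    fix s assume "s \<in> {0..?m}"
    have "{Q\<in>Pow A. card Q = s} = {B. B \<subseteq> A \<and> card B = s}" by auto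
    then show "(\<Sum>Q\<in>{Q\<in>Pow A. card Q = s}. W ?m (card Q)) = real (?m choose s) * W ?m s"
      using n_subsets[OF assms, of s] by simp
  qed
  also have "\<dots> = (\<Sum>s\<in>{0..?m}. 1 / real (Suc ?m))"
  proof (rule sum.cong[OF refl])
    fix s assume s: "s \<in> {0..?m}"
    have "fact s * fact (?m - s) * (?m choose s) = (fact ?m :: nat)"
      using s by (intro binomial_fact_lemma) auto
    then have e: "fact s * fact (?m - s) * real (?m choose s) = fact ?m"
      by (metis of_nat_fact of_nat_mult)
    have "real (?m choose s) * W ?m s = fact ?m / fact (Suc ?m)"
      unfolding W_def using e by (simp add: field_simps)
    also have "\<dots> = 1 / real (Suc ?m)" by (simp add: field_simps del: of_nat_Suc)
    finally show "real (?m choose s) * W ?m s = 1 / real (Suc ?m)" .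
  qed
  also have "\<dots> = 1" by simp
  finally show ?thesis .
qed

lemma W_half:
  assumes "finite A" "x \<in> A"
  shows "(\<Sum>Q\<in>Pow A. if x \<in> Q then W (card A) (card Q) else 0) = 1/2"
proof -
  let ?m = "card A"
  let ?f = "\<lambda>Q. if x \<in> Q then W ?m (card Q) else 0"
  let ?g = "\<lambda>Q. if x \<notin> Q then W ?m (card Q) else 0"
  have "(\<Sum>Q\<in>Pow A. ?f Q) = (\<Sum>Q\<in>Pow A. ?f (A - Q))"
    by (rule sum.reindex_bij_betw[symmetric, where h="\<lambda>Q. A - Q"])
       (auto simp: bij_betw_def inj_on_def)
  also have "\<dots> = (\<Sum>Q\<in>Pow A. ?g Q)"
  proof (rule sum.cong[OF refl])
    fix Q assume Q: "Q \<in> Pow A"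
    have c: "card (A - Q) = ?m - card Q"
      using Q assms by (simp add: card_Diff_subset finite_subset)
    have cl: "card Q \<le> ?m" using Q assms by (simp add: card_mono)
    show "?f (A - Q) = ?g Q"
      using assms c cl unfolding W_def by (auto simp: mult.commute)
  qed
  finally have eq: "(\<Sum>Q\<in>Pow A. ?f Q) = (\<Sum>Q\<in>Pow A. ?g Q)" .
  have "(\<Sum>Q\<in>Pow A. ?f Q) + (\<Sum>Q\<in>Pow A. ?g Q) = (\<Sum>Q\<in>Pow A. W ?m (card Q))"
    by (subst sum.distrib[symmetric]) (rule sum.cong, auto)
  with eq W_total[OF assms(1)] show ?thesis by linarith
qed

lemma shapley_quad:
  fixes w :: "'c \<Rightarrow> real"
  assumes "finite N" "c \<in> N"
  shows "shapley N (\<lambda>Q. (\<Sum>x\<in>Q. w x)\<^sup>2) c = w c * (\<Sum>x\<in>N. w x)"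
proof -
  let ?A = "N - {c}"
  have fA: "finite ?A" using assms by simp
  have cN: "card N = Suc (card ?A)" using assms
    by (metis card_Suc_Diff1)
  have wt: "fact (card Q) * fact (card N - card Q - 1) / fact (card N) = W (card ?A) (card Q)"
    for Q :: "'c set" unfolding W_def cN by simp
  have "shapley N (\<lambda>Q. (\<Sum>x\<in>Q. w x)\<^sup>2) c =
      (\<Sum>Q\<in>Pow ?A. W (card ?A) (card Q) * ((w c)\<^sup>2 + 2 * w c * (\<Sum>x\<in>Q. w x)))"
    unfolding shapley_def wt
  proof (rule sum.cong[OF refl])
    fix Q assume Q: "Q \<in> Pow ?A"
    then have "finite Q" "c \<notin> Q" using fA by (auto intro: finite_subset)
    then show "W (card ?A) (card Q) * ((\<Sum>x\<in>insert c Q. w x)\<^sup>2 - (\<Sum>x\<in>Q. w x)\<^sup>2) =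
        W (card ?A) (card Q) * ((w c)\<^sup>2 + 2 * w c * (\<Sum>x\<in>Q. w x))"
      by (simp add: power2_eq_square algebra_simps)
  qed
  also have "\<dots> = (w c)\<^sup>2 * (\<Sum>Q\<in>Pow ?A. W (card ?A) (card Q)) +
      2 * w c * (\<Sum>Q\<in>Pow ?A. \<Sum>x\<in>?A. w x * (if x \<in> Q then W (card ?A) (card Q) else 0))"
  proof -
    have "(\<Sum>x\<in>Q. w x) * W (card ?A) (card Q) = (\<Sum>x\<in>?A. w x * (if x \<in> Q then W (card ?A) (card Q) else 0))"
      if "Q \<in> Pow ?A" for Q
    proof -
      have "(\<Sum>x\<in>?A. w x * (if x \<in> Q then W (card ?A) (card Q) else 0)) = (\<Sum>x\<in>Q. w x * W (card ?A) (card Q))"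
      proof -
        have "(\<Sum>x\<in>?A. w x * (if x \<in> Q then W (card ?A) (card Q) else 0)) = (\<Sum>x\<in>?A. if x \<in> Q then w x * W (card ?A) (card Q) else 0)"
          by (rule sum.cong) auto
        also have "\<dots> = (\<Sum>x\<in>?A \<inter> Q. w x * W (card ?A) (card Q))"
          using fA by (simp add: sum.inter_restrict)
        also have "?A \<inter> Q = Q" using that by auto
        finally show ?thesis .
      qed
      then show ?thesis by (simp add: sum_distrib_right)
    qed
    then have h: "(\<Sum>Q\<in>Pow ?A. (\<Sum>x\<in>Q. w x) * W (card ?A) (card Q)) = (\<Sum>Q\<in>Pow ?A. \<Sum>x\<in>?A. w x * (if x \<in> Q then W (card ?A) (card Q) else 0))"
      by (intro sum.cong refl) blast
    have "(\<Sum>Q\<in>Pow ?A. W (card ?A) (card Q) * ((w c)\<^sup>2 + 2 * w c * (\<Sum>x\<in>Q. w x))) =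
       (\<Sum>Q\<in>Pow ?A. (w c)\<^sup>2 * W (card ?A) (card Q) + (2 * w c) * ((\<Sum>x\<in>Q. w x) * W (card ?A) (card Q)))"
      by (rule sum.cong) (auto simp: algebra_simps)
    also have "\<dots> = (w c)\<^sup>2 * (\<Sum>Q\<in>Pow ?A. W (card ?A) (card Q)) + (2 * w c) * (\<Sum>Q\<in>Pow ?A. (\<Sum>x\<in>Q. w x) * W (card ?A) (card Q))"
      by (simp add: sum.distrib sum_distrib_left)
    finally show ?thesis using h by simp
  qed
  also have "\<dots> = (w c)\<^sup>2 + 2 * w c * (\<Sum>x\<in>?A. w x * (1/2))"
  proof -
    have "(\<Sum>Q\<in>Pow ?A. \<Sum>x\<in>?A. w x * (if x \<in> Q then W (card ?A) (card Q) else 0))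
        = (\<Sum>x\<in>?A. w x * (\<Sum>Q\<in>Pow ?A. (if x \<in> Q then W (card ?A) (card Q) else 0)))"
      by (subst sum.swap) (simp add: sum_distrib_left)
    also have "\<dots> = (\<Sum>x\<in>?A. w x * (1/2))"
      by (intro sum.cong refl) (simp add: W_half[OF fA])
    finally show ?thesis using W_total[OF fA] by simp
  qed
  also have "\<dots> = w c * (w c + (\<Sum>x\<in>?A. w x))"
    by (simp add: sum_divide_distrib[symmetric] power2_eq_square algebra_simps)
  also have "\<dots> = w c * (\<Sum>x\<in>N. w x)"
    using assms by (simp add: sum.remove)
  finally show ?thesis .
qed



lemma shapley_sum:
  "shapley N (\<lambda>Q. \<Sum>y\<in>Y. g y Q) c = (\<Sum>y\<in>Y. shapley N (g y) c)"
  unfolding shapley_def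
  by (simp add: sum_subtractf[symmetric] sum_distrib_left right_diff_distrib) (rule sum.swap)

lemma shapley_scale:
  "shapley N (\<lambda>Q. r * g Q) c = r * shapley N g c"
  unfolding shapley_def
  by (simp add: sum_distrib_left algebra_simps)

lemma shapley_cong:
  assumes "\<And>Q. Q \<subseteq> N \<Longrightarrow> v Q = v' Q" "c \<in> N"
  shows "shapley N v c = shapley N v' c"
proof -
  have i: "\<And>Q. Q \<subseteq> N - {c} \<Longrightarrow> insert c Q \<subseteq> N" using assms(2) by auto
  show ?thesis
  unfolding shapley_def
  by (intro sum.cong refl arg_cong2[where f="(*)"] arg_cong2[where f="(-)"]) (use assms i in auto)
qed

lemma sq_int_prod:
  assumes "sq_int T f" "sq_int T g" "T \<in> sets lborel"
  shows "set_integrable lborel T (\<lambda>t. f t * g t)"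
proof -
  have mf: "(\<lambda>t. indicator T t *\<^sub>R f t) \<in> borel_measurable lborel"
   and mg: "(\<lambda>t. indicator T t *\<^sub>R g t) \<in> borel_measurable lborel"
    using assms unfolding sq_int_def set_borel_measurable_def by auto
  have if2: "integrable lborel (\<lambda>t. indicator T t *\<^sub>R (f t)\<^sup>2)"
   and ig2: "integrable lborel (\<lambda>t. indicator T t *\<^sub>R (g t)\<^sup>2)"
    using assms unfolding sq_int_def set_integrable_def by auto
  have "integrable lborel (\<lambda>t. indicator T t *\<^sub>R (f t * g t))"
  proof (rule Bochner_Integration.integrable_bound[OF Bochner_Integration.integrable_add[OF if2 ig2]])
    have "(\<lambda>t. indicator T t *\<^sub>R (f t * g t)) = (\<lambda>t. (indicator T t *\<^sub>R f t) * (indicator T t *\<^sub>R g t))"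
      by (auto simp: indicator_def fun_eq_iff)
    then show "(\<lambda>t. indicator T t *\<^sub>R (f t * g t)) \<in> borel_measurable lborel"
      using borel_measurable_times[OF mf mg] by simp
    show "AE x in lborel. norm (indicator T x *\<^sub>R (f x * g x)) \<le> norm (indicator T x *\<^sub>R (f x)\<^sup>2 + indicator T x *\<^sub>R (g x)\<^sup>2)"
    proof (rule AE_I2)
      fix x
      have "\<bar>f x * g x\<bar> \<le> (f x)\<^sup>2 + (g x)\<^sup>2"
      proof -
        have "0 \<le> (\<bar>f x\<bar> - \<bar>g x\<bar>)\<^sup>2" by simp
        then have "2 * (\<bar>f x\<bar> * \<bar>g x\<bar>) \<le> \<bar>f x\<bar>\<^sup>2 + \<bar>g x\<bar>\<^sup>2"
          by (simp add: power2_diff)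
        moreover have "0 \<le> \<bar>f x\<bar> * \<bar>g x\<bar>" by simp
        ultimately have "\<bar>f x\<bar> * \<bar>g x\<bar> \<le> \<bar>f x\<bar>\<^sup>2 + \<bar>g x\<bar>\<^sup>2" by linarith
        then show ?thesis by (simp add: abs_mult)
      qed
      then show "norm (indicator T x *\<^sub>R (f x * g x)) \<le> norm (indicator T x *\<^sub>R (f x)\<^sup>2 + indicator T x *\<^sub>R (g x)\<^sup>2)"
        by (auto simp: indicator_def)
    qed
  qed
  then show ?thesis unfolding set_integrable_def .
qed

lemma ip_union:
  assumes meas: "\<forall>b\<in>D. Ts b \<in> sets lborel"
    and disj: "\<forall>b\<in>D. \<forall>b'\<in>D. b \<noteq> b' \<longrightarrow> Ts b \<inter> Ts b' = {}"
    and un: "(\<Union>b\<in>D. Ts b) = T" and fD: "finite D"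
    and int: "set_integrable lborel T (\<lambda>t. x t * g t)" and B: "B \<subseteq> D"
  shows "ip_on (\<Union>b\<in>B. Ts b) x g = (\<Sum>b\<in>B. ip_on (Ts b) x g)"
  unfolding ip_on_def
proof (rule set_integral_finite_Union)
  show "finite B" using fD B finite_subset by blast
  show "disjoint_family_on Ts B" using disj B unfolding disjoint_family_on_def by blast
  fix b assume b: "b \<in> B"
  then show "Ts b \<in> sets lborel" using meas B by auto
  show "set_integrable lborel (Ts b) (\<lambda>t. x t * g t)"
    by (rule set_integrable_subset[OF int]) (use b B meas un in auto)
qed

lemma ip_hat:
  assumes meas: "\<forall>b\<in>D. Ts b \<in> sets lborel"
    and disj: "\<forall>b\<in>D. \<forall>b'\<in>D. b \<noteq> b' \<longrightarrow> Ts b \<inter> Ts b' = {}"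
    and un: "(\<Union>b\<in>D. Ts b) = T" and fD: "finite D"
    and int: "set_integrable lborel T (\<lambda>t. x t * g t)" and B: "B \<subseteq> D"
    and P: "\<And>t. P t \<longleftrightarrow> (\<exists>b\<in>B. t \<in> Ts b)"
  shows "ip_on T (\<lambda>t. (if P t then x t else 0)) (\<lambda>t. g t * v) = (\<Sum>b\<in>B. ip_on (Ts b) x g) * v"
proof -
  let ?U = "\<Union>b\<in>B. Ts b"
  have UT: "?U \<subseteq> T" using un B by auto
  have "ip_on T (\<lambda>t. (if P t then x t else 0)) (\<lambda>t. g t * v)
      = integral\<^sup>L lborel (\<lambda>t. (indicator ?U t *\<^sub>R (x t * g t)) * v)"
    unfolding ip_on_def set_lebesgue_integral_def
    by (intro Bochner_Integration.integral_cong refl) (use UT P in \<open>auto simp: indicator_def\<close>)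
  also have "\<dots> = ip_on ?U x g * v"
    unfolding ip_on_def set_lebesgue_integral_def by simp
  also have "\<dots> = (\<Sum>b\<in>B. ip_on (Ts b) x g) * v"
    using ip_union[OF meas disj un fD int B] by simp
  finally show ?thesis .
qed

theorem corollary2:
  fixes M :: "'w measure"
    and X :: "'w \<Rightarrow> nat \<Rightarrow> real \<Rightarrow> real"
    and \<alpha> \<beta> :: real and T :: "real set" and Ts :: "nat \<Rightarrow> real set"
    and p d m :: nat
    and Srow :: "nat \<Rightarrow> nat \<Rightarrow> real" and \<kappa> :: "real \<Rightarrow> real \<Rightarrow> real"
    and lker :: "nat \<Rightarrow> real" and \<xi> :: "nat \<Rightarrow> real \<Rightarrow> real"
    and lrow :: "nat \<Rightarrow> real" and vrow :: "nat \<Rightarrow> nat \<Rightarrow> real"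
    and \<omega> :: 'w and k a :: nat
  assumes T_def: "T = {\<alpha>..\<beta>}" and "\<alpha> < \<beta>"
    and "p \<ge> 1" and "d \<ge> 1" and "m \<ge> 1"
    and Ts_int: "\<forall>b\<in>{1..d}. is_interval (Ts b)"
    and Ts_disj: "\<forall>b\<in>{1..d}. \<forall>b'\<in>{1..d}. b \<noteq> b' \<longrightarrow> Ts b \<inter> Ts b' = {}"
    and Ts_union: "(\<Union>b\<in>{1..d}. Ts b) = T"
    \<comment> \<open>the process: mean zero, separable covariance Srow(j,l) * kappa(s,t), L2-continuous\<close>
    and "prob_space M"
    and rv: "\<forall>j\<in>{1..p}. \<forall>t\<in>T. (\<lambda>w. X w j t) \<in> borel_measurable M
                 \<and> integrable M (\<lambda>w. (X w j t)\<^sup>2)"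
    and mean0: "\<forall>j\<in>{1..p}. \<forall>t\<in>T. prob_space.expectation M (\<lambda>w. X w j t) = 0"
    and cov: "\<forall>j\<in>{1..p}. \<forall>l\<in>{1..p}. \<forall>s\<in>T. \<forall>t\<in>T.
                 prob_space.expectation M (\<lambda>w. X w j s * X w l t) = Srow j l * \<kappa> s t"
    and L2cont: "\<forall>j\<in>{1..p}. \<forall>t\<in>T.
                 ((\<lambda>s. prob_space.expectation M (\<lambda>w. (X w j s - X w j t)\<^sup>2)) \<longlongrightarrow> 0) (at t within T)"
    and spd: "spd_matrix p Srow"
    and pdk: "pd_kernel T \<kappa>"
    \<comment> \<open>the m largest eigenpairs of the integral operator K (orthonormal in L2(T))\<close>
    and xi_sq: "\<forall>i\<in>{1..m}. sq_int T (\<xi> i)"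
    and xi_on: "\<forall>i\<in>{1..m}. \<forall>i'\<in>{1..m}. ip_on T (\<xi> i) (\<xi> i') = (if i = i' then 1 else 0)"
    and xi_eig: "\<forall>i\<in>{1..m}. \<forall>s\<in>T. int_op T \<kappa> (\<xi> i) s = lker i * \<xi> i s"
    and lker_dec: "\<forall>i\<in>{1..m}. \<forall>i'\<in>{1..m}. i \<le> i' \<longrightarrow> lker i' \<le> lker i"
    and lker_pos: "lker m > 0"
    and lker_largest: "\<forall>g \<mu>. sq_int T g \<and> ip_on T g g > 0
                 \<and> (\<forall>i\<in>{1..m}. ip_on T g (\<xi> i) = 0)
                 \<and> (\<forall>s\<in>T. int_op T \<kappa> g s = \<mu> * g s) \<longrightarrow> \<mu> \<le> lker m"
    \<comment> \<open>the eigenpairs of Srow (orthonormal eigenvectors)\<close>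
    and v_eig: "\<forall>j\<in>{1..p}. \<forall>k'\<in>{1..p}. (\<Sum>l=1..p. Srow k' l * vrow j l) = lrow j * vrow j k'"
    and v_on: "\<forall>j\<in>{1..p}. \<forall>j'\<in>{1..p}. (\<Sum>l=1..p. vrow j l * vrow j' l) = (if j = j' then 1 else 0)"
    \<comment> \<open>a realisation of the process with square-integrable paths\<close>
    and "\<omega> \<in> space M"
    and paths: "\<forall>l\<in>{1..p}. sq_int T (X \<omega> l)"
    and "k \<in> {1..p}" and "a \<in> {1..d}"
  shows "Theta T Ts p d m lker \<xi> lrow vrow (X \<omega>) (\<lambda>_ _. 0) k a =
     (\<Sum>i=1..m. \<Sum>j=1..p. (1 / (lker i * lrow j)) *
        (ip_on (Ts a) (X \<omega> k) (\<xi> i) * vrow j k *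
          (\<Sum>l=1..p. ip_on T (X \<omega> l) (\<xi> i) * vrow j l)))"
proof -
  define N where "N = {1..p} \<times> {1..d}"
  define w where "w i j = (\<lambda>(l,b). ip_on (Ts b) (X \<omega> l) (\<xi> i) * vrow j l)" for i j
  have meas: "\<forall>b\<in>{1..d}. Ts b \<in> sets lborel"
    using Ts_int real_interval_borel_measurable by simp
  have Tm: "T \<in> sets lborel" using T_def by simp
  have int: "set_integrable lborel T (\<lambda>t. X \<omega> l t * \<xi> i t)" if "l \<in> {1..p}" "i \<in> {1..m}" for l i
    using sq_int_prod[OF _ _ Tm] paths xi_sq that by blast
  have fN: "finite N" unfolding N_def by simp
  have cN: "(k,a) \<in> N" unfolding N_def using assms by simp
  have step1: "fmmd2 T p m lker \<xi> lrow vrow (hatX Ts Q (X \<omega>) (\<lambda>_ _. 0)) (\<lambda>_ _. 0)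
      = (\<Sum>i=1..m. \<Sum>j=1..p. (1 / (lker i * lrow j)) * (\<Sum>x\<in>Q. w i j x)\<^sup>2)" if Q: "Q \<subseteq> N" for Q
    unfolding fmmd2_def
  proof (intro sum.cong refl arg_cong2[where f="(*)"] arg_cong[where f="\<lambda>x. x\<^sup>2"])
    fix i j assume i: "i \<in> {1..m}" and j: "j \<in> {1..p}"
    define B where "B l = {1..d} \<inter> {b. (l,b) \<in> Q}" for l
    have inner: "ip_on T (\<lambda>t. hatX Ts Q (X \<omega>) (\<lambda>_ _. 0) l t - 0) (\<lambda>t. \<xi> i t * vrow j l)
        = (\<Sum>b\<in>B l. w i j (l,b))" if l: "l \<in> {1..p}" for l
    proof -
      have e: "(\<lambda>t. hatX Ts Q (X \<omega>) (\<lambda>_ _. 0) l t - 0) = (\<lambda>t. if (\<exists>b. (l,b)\<in>Q \<and> t\<in>Ts b) then X \<omega> l t else 0)"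
        by (simp add: hatX_def fun_eq_iff)
      have P: "(\<exists>b. (l,b)\<in>Q \<and> t\<in>Ts b) \<longleftrightarrow> (\<exists>b\<in>B l. t \<in> Ts b)" for t
        using Q unfolding B_def N_def by auto
      have "ip_on T (\<lambda>t. if (\<exists>b. (l,b)\<in>Q \<and> t\<in>Ts b) then X \<omega> l t else 0) (\<lambda>t. \<xi> i t * vrow j l)
          = (\<Sum>b\<in>B l. ip_on (Ts b) (X \<omega> l) (\<xi> i)) * vrow j l"
        by (rule ip_hat[OF meas Ts_disj Ts_union _ int[OF l i], where B="B l"]) (use P in \<open>auto simp: B_def\<close>)
      then show ?thesis unfolding e w_def by (simp add: sum_distrib_right)
    qed
    have "(\<Sum>x\<in>Q. w i j x) = (\<Sum>x\<in>N. if x \<in> Q then w i j x else 0)"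
      using fN Q by (simp add: sum.inter_restrict[symmetric] Int_absorb1)
    also have "\<dots> = (\<Sum>l=1..p. \<Sum>b=1..d. if (l,b) \<in> Q then w i j (l,b) else 0)"
      unfolding N_def by (simp add: sum.cartesian_product)
    also have "\<dots> = (\<Sum>l=1..p. \<Sum>b\<in>B l. w i j (l,b))"
      unfolding B_def by (simp add: sum.inter_restrict)
    also have "\<dots> = (\<Sum>l=1..p. ip_on T (\<lambda>t. hatX Ts Q (X \<omega>) (\<lambda>_ _. 0) l t - 0) (\<lambda>t. \<xi> i t * vrow j l))"
      using inner by simp
    finally show "(\<Sum>l=1..p. ip_on T (\<lambda>t. hatX Ts Q (X \<omega>) (\<lambda>_ _. 0) l t - 0) (\<lambda>t. \<xi> i t * vrow j l))
        = (\<Sum>x\<in>Q. w i j x)" by simp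
  qed
  have step3: "(\<Sum>x\<in>N. w i j x) = (\<Sum>l=1..p. ip_on T (X \<omega> l) (\<xi> i) * vrow j l)" if i: "i \<in> {1..m}" for i j
  proof -
    have "(\<Sum>x\<in>N. w i j x) = (\<Sum>l=1..p. \<Sum>b=1..d. w i j (l,b))"
      unfolding N_def by (simp add: sum.cartesian_product)
    also have "\<dots> = (\<Sum>l=1..p. ip_on T (X \<omega> l) (\<xi> i) * vrow j l)"
    proof (rule sum.cong[OF refl])
      fix l assume l: "l \<in> {1..p}"
      have "ip_on (\<Union>b\<in>{1..d}. Ts b) (X \<omega> l) (\<xi> i) = (\<Sum>b=1..d. ip_on (Ts b) (X \<omega> l) (\<xi> i))"
        by (rule ip_union[OF meas Ts_disj Ts_union _ int[OF l i]]) auto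
      then show "(\<Sum>b=1..d. w i j (l,b)) = ip_on T (X \<omega> l) (\<xi> i) * vrow j l"
        unfolding w_def Ts_union by (simp add: sum_distrib_right)
    qed
    finally show ?thesis .
  qed
  have "Theta T Ts p d m lker \<xi> lrow vrow (X \<omega>) (\<lambda>_ _. 0) k a
      = shapley N (\<lambda>Q. \<Sum>i=1..m. \<Sum>j=1..p. (1 / (lker i * lrow j)) * (\<Sum>x\<in>Q. w i j x)\<^sup>2) (k,a)"
    unfolding Theta_def N_def[symmetric]
    by (rule shapley_cong[OF step1 cN])
  also have "\<dots> = (\<Sum>i=1..m. \<Sum>j=1..p. (1 / (lker i * lrow j)) * (w i j (k,a) * (\<Sum>x\<in>N. w i j x)))"
    by (simp only: shapley_sum shapley_scale shapley_quad[OF fN cN])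
  also have "\<dots> = (\<Sum>i=1..m. \<Sum>j=1..p. (1 / (lker i * lrow j)) *
        (ip_on (Ts a) (X \<omega> k) (\<xi> i) * vrow j k *
          (\<Sum>l=1..p. ip_on T (X \<omega> l) (\<xi> i) * vrow j l)))"
    by (intro sum.cong refl) (simp add: step3, simp add: w_def)
  finally show ?thesis .
qed

end
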